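(* Let $D\in\{0,1\}$, and let $M(0),M(1)\in\{0,1\}$ and $Y(d,m)\in\{0,1\}$ for $d,m\in\{0,1\}$ be random variables such that $D$, $\{M(0),M(1)\}$ and $\{Y(0,0),Y(0,1),Y(1,0),Y(1,1)\}$ are mutually independent, and such that $Y(0,0)=Y(1,0)=0$ almost surely. Define $M=M(D)$, $Y(d)=Y(d,M(d))$ and $Y=Y(D)$. Let $\beta_M=\mathbb{E}[M(1)-M(0)]$, $\beta_Y=\mathbb{E}[Y(1,1)-Y(0,1)]$, and define the principal stratum $S$ by $S=\mathrm{al}$ if $M(0)=M(1)=1$, $S=\mathrm{mi}$ if $M(0)=0,M(1)=1$, $S=\mathrm{ma}$ if $M(0)=1,M(1)=0$, $S=\mathrm{ne}$ if $M(0)=M(1)=0$. Let $$\boldsymbol\theta=\begin{pmatrix}\mathbb{E}[Y(1)-Y(0)\mid S=\mathrm{al}]\\ \mathbb{E}[Y(1)-Y(0)\mid S=\mathrm{mi}]\\ \mathbb{E}[Y(1)-Y(0)\mid S=\mathrm{ma}]\\ \mathbb{E}[Y(1)-Y(0)\mid S=\mathrm{ne}]\end{pmatrix}=\begin{pmatrix}\beta_Y\\ \beta_Y+\mathbb{E}[Y(0,1)]\\ -\mathbb{E}[Y(0,1)]\\ 0\end{pmatrix}$$ (where the conditional expectations are defined). Then, whenever the relevant conditioning events have positive probability, each of the estimands $\mathrm{ATE}_{M=1}=\mathbb{E}[Y(1)-Y(0)\mid M=1]$, $\mathrm{ATT}_{M=1}=\mathbb{E}[Y(1)-Y(0)\mid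 D=1,M=1]$, $\mathrm{ATE}=\mathbb{E}[Y(1)-Y(0)]$ and $\mathrm{ATT}=\mathbb{E}[Y(1)-Y(0)\mid D=1]$ equals $(\mathbf{w}^T\boldsymbol\theta)/(\mathbf{w}^T\mathbf{1})$, where $\mathbf 1$ is the all-ones vector and the weight vector $\mathbf w$ is, respectively, $$\mathbf{w}(\mathrm{ATE}_{M=1})=\begin{pmatrix}P(S=\mathrm{al})\\ [P(S=\mathrm{ma})+\beta_M]\,P(D=1)\\ P(S=\mathrm{ma})\,P(D=0)\\ 0\end{pmatrix},\quad \mathbf{w}(\mathrm{ATT}_{M=1})=\begin{pmatrix}P(S=\mathrm{al})\\ P(S=\mathrm{ma})+\beta_M\\ 0\\ 0\end{pmatrix},$$ $$\mathbf{w}(\mathrm{ATE})=\mathbf{w}(\mathrm{ATT})=\begin{pmatrix}P(S=\mathrm{al})\\ P(S=\mathrm{mi})\\ P(S=\mathrm{ma})\\ P(S=\mathrm{ne})\end{pmatrix}=\begin{pmatrix}P(S=\mathrm{al})\\ P(S=\mathrm{ma})+\beta_M\\ P(S=\mathrm{ma})\\ P(S=\mathrm{ne})\end{pmatrix}.$$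
   Context: Setting: each unit is a police–civilian encounter. $D$ is the civilian's race ($D=1$ minority), $M(d)$ the potential indicator of detainment/stop under race $d$, $Y(d,m)$ the potential indicator of police use of force under race $d$ and detainment status $m$. The variables arise from a nonparametric structural equation model with independent errors $D=f_D(\epsilon_D)$, $M=f_M(D,\epsilon_M)$, $Y=f_Y(D,M,\epsilon_Y)$ with $M(d)=f_M(d,\epsilon_M)$, $Y(d,m)=f_Y(d,m,\epsilon_Y)$, which yields the stated mutual independence. The condition $Y(0,0)=Y(1,0)=0$ ("mandatory reporting", part (i)) says there is no use of force without a stop. No monotonicity $M(1)\ge M(0)$ is assumed. *)

theory Defs
  imports "HOL-Probability.Probability"
begin

text \<open>Principal strata: al (always stopped), mi (stopped only if minority),
  ma (stopped only if majority), ne (never stopped).\<close>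
datatype stratum = Al | Mi | Ma | Ne

text \<open>Potential detainment M(d) is Mp d, potential force Y(d,m) is Yp d m (True = 1).\<close>

definition Mobs :: "('a \<Rightarrow> bool) \<Rightarrow> (bool \<Rightarrow> 'a \<Rightarrow> bool) \<Rightarrow> 'a \<Rightarrow> bool" where
  "Mobs D Mp x = Mp (D x) x"

definition Ypot :: "(bool \<Rightarrow> 'a \<Rightarrow> bool) \<Rightarrow> (bool \<Rightarrow> bool \<Rightarrow> 'a \<Rightarrow> bool) \<Rightarrow> bool \<Rightarrow> 'a \<Rightarrow> bool" where
  "Ypot Mp Yp d x = Yp d (Mp d x) x"

definition Yobs :: "('a \<Rightarrow> bool) \<Rightarrow> (bool \<Rightarrow> 'a \<Rightarrow> bool) \<Rightarrow> (bool \<Rightarrow> bool \<Rightarrow> 'a \<Rightarrow> bool) \<Rightarrow> 'a \<Rightarrow> bool" where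
  "Yobs D Mp Yp x = Ypot Mp Yp (D x) x"

definition strat :: "(bool \<Rightarrow> 'a \<Rightarrow> bool) \<Rightarrow> 'a \<Rightarrow> stratum" where
  "strat Mp x = (if Mp False x \<and> Mp True x then Al
                 else if \<not> Mp False x \<and> Mp True x then Mi
                 else if Mp False x \<and> \<not> Mp True x then Ma
                 else Ne)"

definition effect :: "(bool \<Rightarrow> 'a \<Rightarrow> bool) \<Rightarrow> (bool \<Rightarrow> bool \<Rightarrow> 'a \<Rightarrow> bool) \<Rightarrow> 'a \<Rightarrow> real" where
  "effect Mp Yp x = of_bool (Ypot Mp Yp True x) - of_bool (Ypot Mp Yp False x)"

definition cond_exp_ev :: "'a measure \<Rightarrow> ('a \<Rightarrow> real) \<Rightarrow> 'a set \<Rightarrow> real" where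
  "cond_exp_ev P f A = (\<integral>x. f x * indicator A x \<partial>P) / measure P A"

definition wavg :: "(stratum \<Rightarrow> real) \<Rightarrow> (stratum \<Rightarrow> real) \<Rightarrow> real" where
  "wavg w \<theta> = (w Al * \<theta> Al + w Mi * \<theta> Mi + w Ma * \<theta> Ma + w Ne * \<theta> Ne)
               / (w Al + w Mi + w Ma + w Ne)"

end

theory Submission imports Defs begin

lemma abs_le_Max_range:
  fixes f :: "'b::finite \<Rightarrow> real"
  shows "\<bar>f a\<bar> \<le> Max (abs ` range f)"
  by (rule Max_ge) auto

lemma triple:
  fixes P :: "'a measure" and D :: "'a \<Rightarrow> bool"
    and Mp :: "bool \<Rightarrow> 'a \<Rightarrow> bool"
    and Yp :: "bool \<Rightarrow> bool \<Rightarrow> 'a \<Rightarrow> bool"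
    and f :: "bool \<Rightarrow> real" and g :: "bool \<times> bool \<Rightarrow> real"
    and h :: "bool \<times> bool \<times> bool \<times> bool \<Rightarrow> real"
  assumes ps: "prob_space P"
    and indep: "prob_space.indep_vars P (\<lambda>_. count_space UNIV)
          (\<lambda>i x. if i = 0 then [D x]
                 else if i = 1 then [Mp False x, Mp True x]
                 else [Yp False False x, Yp False True x, Yp True False x, Yp True True x])
          {0, 1, 2 :: nat}"
  shows "integrable P (\<lambda>x. f (D x) * g (Mp False x, Mp True x)
            * h (Yp False False x, Yp False True x, Yp True False x, Yp True True x))"
    and "(\<integral>x. f (D x) * g (Mp False x, Mp True x)
            * h (Yp False False x, Yp False True x, Yp True False x, Yp True True x) \<partial>P)
         = (\<integral>x. f (D x) \<partial>P) * (\<integral>x. g (Mp False x, Mp True x) \<partial>P)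
            * (\<integral>x. h (Yp False False x, Yp False True x, Yp True False x, Yp True True x) \<partial>P)"
proof -
  interpret prob_space P by (rule ps)
  define X where "X = (\<lambda>(i::nat) x. if i = 0 then [D x]
                 else if i = 1 then [Mp False x, Mp True x]
                 else [Yp False False x, Yp False True x, Yp True False x, Yp True True x])"
  define G :: "nat \<Rightarrow> bool list \<Rightarrow> real" where
    "G i l = (if i = 0 then f (l!0) else if i = 1 then g (l!0, l!1) else h (l!0, l!1, l!2, l!3))" for i l
  have ind2: "indep_vars (\<lambda>_. borel) (\<lambda>i. G i \<circ> X i) {0,1,2}"
    by (rule indep_vars_compose[OF indep[folded X_def]]) simp
  define B where "B = Max (abs ` range f) + Max (abs ` range g) + Max (abs ` range h)"
  have nn: "0 \<le> Max (abs ` range f)" "0 \<le> Max (abs ` range g)" "0 \<le> Max (abs ` range h)"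
    using abs_le_Max_range[of f True] abs_le_Max_range[of g "(True,True)"]
      abs_le_Max_range[of h "(True,True,True,True)"] by linarith+
  have bnd: "\<bar>G i l\<bar> \<le> B" for i l
  proof -
    have a: "\<bar>f (l!0)\<bar> \<le> Max (abs ` range f)" by (rule abs_le_Max_range)
    have b: "\<bar>g (l!0, l!1)\<bar> \<le> Max (abs ` range g)" by (rule abs_le_Max_range)
    have c: "\<bar>h (l!0, l!1, l!2, l!3)\<bar> \<le> Max (abs ` range h)" by (rule abs_le_Max_range)
    show ?thesis unfolding G_def B_def using nn a b c
      by (simp only: split: if_split) linarith
  qed
  have int: "integrable P (G i \<circ> X i)" if "i \<in> {0,1,2}" for i
  proof (rule integrable_const_bound[where B=B])
    show "AE x in P. norm ((G i \<circ> X i) x) \<le> B" using bnd by simp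
    show "G i \<circ> X i \<in> borel_measurable P"
      using ind2 that unfolding indep_vars_def by auto
  qed
  have eq: "(\<Prod>i\<in>{0,1,2::nat}. (G i \<circ> X i) x) = f (D x) * g (Mp False x, Mp True x)
            * h (Yp False False x, Yp False True x, Yp True False x, Yp True True x)" for x
    by (simp add: G_def X_def)
  have e0: "(G 0 \<circ> X 0) = (\<lambda>x. f (D x))" by (simp add: G_def X_def fun_eq_iff)
  have e1: "(G 1 \<circ> X 1) = (\<lambda>x. g (Mp False x, Mp True x))" by (simp add: G_def X_def fun_eq_iff)
  have e2: "(G 2 \<circ> X 2) = (\<lambda>x. h (Yp False False x, Yp False True x, Yp True False x, Yp True True x))"
    by (simp add: G_def X_def fun_eq_iff)
  show "integrable P (\<lambda>x. f (D x) * g (Mp False x, Mp True x)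
            * h (Yp False False x, Yp False True x, Yp True False x, Yp True True x))"
  proof -
    have "integrable P (\<lambda>x. \<Prod>i\<in>{0,1,2::nat}. (G i \<circ> X i) x)"
      by (rule indep_vars_integrable[OF _ ind2 int]) auto
    thus ?thesis unfolding eq .
  qed
  show "(\<integral>x. f (D x) * g (Mp False x, Mp True x)
            * h (Yp False False x, Yp False True x, Yp True False x, Yp True True x) \<partial>P)
         = (\<integral>x. f (D x) \<partial>P) * (\<integral>x. g (Mp False x, Mp True x) \<partial>P)
            * (\<integral>x. h (Yp False False x, Yp False True x, Yp True False x, Yp True True x) \<partial>P)"
  proof -
    have "(\<integral>x. (\<Prod>i\<in>{0,1,2::nat}. (G i \<circ> X i) x) \<partial>P) = (\<Prod>i\<in>{0,1,2::nat}. \<integral>x. (G i \<circ> X i) x \<partial>P)"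
      by (rule indep_vars_lebesgue_integral[OF _ ind2 int]) auto
    also have "\<dots> = (\<integral>x. (G 0 \<circ> X 0) x \<partial>P) * (\<integral>x. (G 1 \<circ> X 1) x \<partial>P) * (\<integral>x. (G 2 \<circ> X 2) x \<partial>P)"
      by simp
    finally show ?thesis unfolding eq e0 e1 e2 .
  qed
qed

locale pa =
  fixes P :: "'a measure" and D :: "'a \<Rightarrow> bool"
    and Mp :: "bool \<Rightarrow> 'a \<Rightarrow> bool"
    and Yp :: "bool \<Rightarrow> bool \<Rightarrow> 'a \<Rightarrow> bool"
  assumes ps: "prob_space P"
    and indep: "prob_space.indep_vars P (\<lambda>_. count_space UNIV)
          (\<lambda>i x. if i = 0 then [D x]
                 else if i = 1 then [Mp False x, Mp True x]
                 else [Yp False False x, Yp False True x, Yp True False x, Yp True True x])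
          {0, 1, 2 :: nat}"
    and mand: "AE x in P. \<not> Yp False False x \<and> \<not> Yp True False x"
begin

sublocale prob_space P by (rule ps)

definition "mm x = (Mp False x, Mp True x)"
definition "yy x = (Yp False False x, Yp False True x, Yp True False x, Yp True True x)"
definition a :: real where "a = (\<integral>x. of_bool (D x) \<partial>P)"
definition "pS s = measure P {x \<in> space P. strat Mp x = s}"
definition E01 :: real where "E01 = (\<integral>x. of_bool (Yp False True x) \<partial>P)"
definition E11 :: real where "E11 = (\<integral>x. of_bool (Yp True True x) \<partial>P)"

lemma T1:
  fixes f :: "bool \<Rightarrow> real" and g :: "bool \<times> bool \<Rightarrow> real" and h :: "bool \<times> bool \<times> bool \<times> bool \<Rightarrow> real"
  shows "integrable P (\<lambda>x. f (D x) * g (mm x) * h (yy x))"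
  using triple(1)[OF ps indep] unfolding mm_def yy_def .

lemma T2:
  fixes f :: "bool \<Rightarrow> real" and g :: "bool \<times> bool \<Rightarrow> real" and h :: "bool \<times> bool \<times> bool \<times> bool \<Rightarrow> real"
  shows "(\<integral>x. f (D x) * g (mm x) * h (yy x) \<partial>P)
   = (\<integral>x. f (D x) \<partial>P) * (\<integral>x. g (mm x) \<partial>P) * (\<integral>x. h (yy x) \<partial>P)"
  using triple(2)[OF ps indep] unfolding mm_def yy_def .

lemma intf:
  fixes f :: "bool \<Rightarrow> real" and g :: "bool \<times> bool \<Rightarrow> real" and h :: "bool \<times> bool \<times> bool \<times> bool \<Rightarrow> real"
  shows "integrable P (\<lambda>x. f (D x))"
  using T1[of f "\<lambda>_. 1" "\<lambda>_. 1"] by simp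
lemma intg:
  fixes f :: "bool \<Rightarrow> real" and g :: "bool \<times> bool \<Rightarrow> real" and h :: "bool \<times> bool \<times> bool \<times> bool \<Rightarrow> real"
  shows "integrable P (\<lambda>x. g (mm x))"
  using T1[of "\<lambda>_. 1" g "\<lambda>_. 1"] by simp
lemma inth:
  fixes f :: "bool \<Rightarrow> real" and g :: "bool \<times> bool \<Rightarrow> real" and h :: "bool \<times> bool \<times> bool \<times> bool \<Rightarrow> real"
  shows "integrable P (\<lambda>x. h (yy x))"
  using T1[of "\<lambda>_. 1" "\<lambda>_. 1" h] by simp

lemma Ef:
  fixes f :: "bool \<Rightarrow> real" and g :: "bool \<times> bool \<Rightarrow> real" and h :: "bool \<times> bool \<times> bool \<times> bool \<Rightarrow> real"
  shows "(\<integral>x. f (D x) \<partial>P) = f True * a + f False * (1 - a)"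
proof -
  have "(\<integral>x. f (D x) \<partial>P) = (\<integral>x. f False + (f True - f False) * of_bool (D x) \<partial>P)"
    by (rule Bochner_Integration.integral_cong) auto
  also have "\<dots> = f False + (f True - f False) * a"
    using intf[of of_bool] by (simp add: a_def prob_space)
  finally show ?thesis by (simp add: algebra_simps)
qed

lemma meas_eq: "measure P {x \<in> space P. Q x} = (\<integral>x. of_bool (Q x) \<partial>P)"
proof -
  have "measure P {x \<in> space P. Q x} = (\<integral>x. indicator {x \<in> space P. Q x} x \<partial>P)"
    by (simp add: Int_absorb2)
  also have "\<dots> = (\<integral>x. of_bool (Q x) \<partial>P)"
    by (rule Bochner_Integration.integral_cong) (auto simp: indicator_def)
  finally show ?thesis .
qed

lemma cond_eq: "cond_exp_ev P F {x \<in> space P. Q x}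
   = (\<integral>x. F x * of_bool (Q x) \<partial>P) / (\<integral>x. of_bool (Q x) \<partial>P)"
proof -
  have "(\<integral>x. F x * indicator {x \<in> space P. Q x} x \<partial>P) = (\<integral>x. F x * of_bool (Q x) \<partial>P)"
    by (rule Bochner_Integration.integral_cong) (auto simp: indicator_def)
  thus ?thesis unfolding cond_exp_ev_def meas_eq by simp
qed

definition gs :: "stratum \<Rightarrow> bool \<times> bool \<Rightarrow> real" where "gs s p = of_bool ((if fst p \<and> snd p then Al else if \<not> fst p \<and> snd p then Mi
   else if fst p \<and> \<not> snd p then Ma else Ne) = s)"

lemma gs_strat: "gs s (mm x) = of_bool (strat Mp x = s)"
  by (simp add: gs_def mm_def strat_def)

lemma pS_int: "pS s = (\<integral>x. gs s (mm x) \<partial>P)"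
  unfolding pS_def meas_eq gs_strat ..

lemma Eg:
  fixes f :: "bool \<Rightarrow> real" and g :: "bool \<times> bool \<Rightarrow> real" and h :: "bool \<times> bool \<times> bool \<times> bool \<Rightarrow> real"
  shows "(\<integral>x. g (mm x) \<partial>P) = g (True,True) * pS Al + g (False,True) * pS Mi
     + g (True,False) * pS Ma + g (False,False) * pS Ne"
proof -
  have "(\<integral>x. g (mm x) \<partial>P) = (\<integral>x. g (True,True) * gs Al (mm x) + g (False,True) * gs Mi (mm x)
     + g (True,False) * gs Ma (mm x) + g (False,False) * gs Ne (mm x) \<partial>P)"
    by (rule Bochner_Integration.integral_cong) (auto simp: gs_def mm_def)
  also have "\<dots> = g (True,True) * pS Al + g (False,True) * pS Mi
     + g (True,False) * pS Ma + g (False,False) * pS Ne"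
    by (simp add: intg pS_int)
  finally show ?thesis .
qed

lemma Y0: "(\<integral>x. of_bool (Yp True False x) \<partial>P) = 0" "(\<integral>x. of_bool (Yp False False x) \<partial>P) = 0"
  by (rule integral_eq_zero_AE; use mand in \<open>auto elim: AE_mp\<close>)+

lemma KEY:
  fixes f :: "bool \<Rightarrow> real" and g :: "bool \<times> bool \<Rightarrow> real"
  shows "integrable P (\<lambda>x. effect Mp Yp x * f (D x) * g (mm x))"
    and "(\<integral>x. effect Mp Yp x * f (D x) * g (mm x) \<partial>P)
       = (\<integral>x. f (D x) \<partial>P) * ((g (True,True) * pS Al + g (False,True) * pS Mi) * E11
            - (g (True,True) * pS Al + g (True,False) * pS Ma) * E01)"
proof -
  define g1 where "g1 p = g p * of_bool (snd p)" for p :: "bool \<times> bool"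
  define g2 where "g2 p = g p * of_bool (\<not> snd p)" for p :: "bool \<times> bool"
  define g3 where "g3 p = g p * of_bool (fst p)" for p :: "bool \<times> bool"
  define g4 where "g4 p = g p * of_bool (\<not> fst p)" for p :: "bool \<times> bool"
  define h11 :: "bool \<times> bool \<times> bool \<times> bool \<Rightarrow> real" where "h11 = (\<lambda>(a,b,c,d). of_bool d)"
  define h10 :: "bool \<times> bool \<times> bool \<times> bool \<Rightarrow> real" where "h10 = (\<lambda>(a,b,c,d). of_bool c)"
  define h01 :: "bool \<times> bool \<times> bool \<times> bool \<Rightarrow> real" where "h01 = (\<lambda>(a,b,c,d). of_bool b)"
  define h00 :: "bool \<times> bool \<times> bool \<times> bool \<Rightarrow> real" where "h00 = (\<lambda>(a,b,c,d). of_bool a)"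
  have pw: "effect Mp Yp x * f (D x) * g (mm x) =
     f (D x) * g1 (mm x) * h11 (yy x) + f (D x) * g2 (mm x) * h10 (yy x)
     - f (D x) * g3 (mm x) * h01 (yy x) - f (D x) * g4 (mm x) * h00 (yy x)" for x
    by (simp add: effect_def Ypot_def g1_def g2_def g3_def g4_def h11_def h10_def h01_def h00_def
        mm_def yy_def algebra_simps)
  have i1: "integrable P (\<lambda>x. f (D x) * g1 (mm x) * h11 (yy x))" by (rule T1)
  have i2: "integrable P (\<lambda>x. f (D x) * g2 (mm x) * h10 (yy x))" by (rule T1)
  have i3: "integrable P (\<lambda>x. f (D x) * g3 (mm x) * h01 (yy x))" by (rule T1)
  have i4: "integrable P (\<lambda>x. f (D x) * g4 (mm x) * h00 (yy x))" by (rule T1)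
  show "integrable P (\<lambda>x. effect Mp Yp x * f (D x) * g (mm x))"
    unfolding pw using i1 i2 i3 i4 by simp
  have y11: "(\<integral>x. h11 (yy x) \<partial>P) = E11" by (simp add: h11_def yy_def E11_def)
  have y01: "(\<integral>x. h01 (yy x) \<partial>P) = E01" by (simp add: h01_def yy_def E01_def)
  have y10: "(\<integral>x. h10 (yy x) \<partial>P) = 0" using Y0(1) by (simp add: h10_def yy_def)
  have y00: "(\<integral>x. h00 (yy x) \<partial>P) = 0" using Y0(2) by (simp add: h00_def yy_def)
  have "(\<integral>x. effect Mp Yp x * f (D x) * g (mm x) \<partial>P)
     = (\<integral>x. f (D x) * g1 (mm x) * h11 (yy x) \<partial>P) + (\<integral>x. f (D x) * g2 (mm x) * h10 (yy x) \<partial>P)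
     - (\<integral>x. f (D x) * g3 (mm x) * h01 (yy x) \<partial>P) - (\<integral>x. f (D x) * g4 (mm x) * h00 (yy x) \<partial>P)"
    unfolding pw using i1 i2 i3 i4 by simp
  also have "\<dots> = (\<integral>x. f (D x) \<partial>P) * (\<integral>x. g1 (mm x) \<partial>P) * E11
      - (\<integral>x. f (D x) \<partial>P) * (\<integral>x. g3 (mm x) \<partial>P) * E01"
    unfolding T2 y11 y01 y10 y00 by simp
  also have "\<dots> = (\<integral>x. f (D x) \<partial>P) * ((g (True,True) * pS Al + g (False,True) * pS Mi) * E11
            - (g (True,True) * pS Al + g (True,False) * pS Ma) * E01)"
    unfolding Eg by (simp add: g1_def g3_def algebra_simps)
  finally show "(\<integral>x. effect Mp Yp x * f (D x) * g (mm x) \<partial>P)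
       = (\<integral>x. f (D x) \<partial>P) * ((g (True,True) * pS Al + g (False,True) * pS Mi) * E11
            - (g (True,True) * pS Al + g (True,False) * pS Ma) * E01)" .
qed

lemma den:
  fixes f :: "bool \<Rightarrow> real" and g :: "bool \<times> bool \<Rightarrow> real"
  shows "integrable P (\<lambda>x. f (D x) * g (mm x))"
    and "(\<integral>x. f (D x) * g (mm x) \<partial>P) = (\<integral>x. f (D x) \<partial>P) * (\<integral>x. g (mm x) \<partial>P)"
  using T1[of f g "\<lambda>_. 1"] T2[of f g "\<lambda>_. 1"] by (simp_all add: prob_space)

end

theorem propositionA1:
  fixes P :: "'a measure"
    and D :: "'a \<Rightarrow> bool"
    and Mp :: "bool \<Rightarrow> 'a \<Rightarrow> bool"
    and Yp :: "bool \<Rightarrow> bool \<Rightarrow> 'a \<Rightarrow> bool"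
    and \<beta>M \<beta>Y :: real
    and pS \<theta> :: "stratum \<Rightarrow> real"
    and wATEM wATTM wATE :: "stratum \<Rightarrow> real"
  assumes ps: "prob_space P"
    and indep: "prob_space.indep_vars P (\<lambda>_. count_space UNIV)
          (\<lambda>i x. if i = 0 then [D x]
                 else if i = 1 then [Mp False x, Mp True x]
                 else [Yp False False x, Yp False True x, Yp True False x, Yp True True x])
          {0, 1, 2 :: nat}"
    and mand: "AE x in P. \<not> Yp False False x \<and> \<not> Yp True False x"
  defines "\<beta>M \<equiv> (\<integral>x. of_bool (Mp True x) - of_bool (Mp False x) \<partial>P)"
    and "\<beta>Y \<equiv> (\<integral>x. of_bool (Yp True True x) - of_bool (Yp False True x) \<partial>P)"
    and "pS \<equiv> (\<lambda>s. measure P {x \<in> space P. strat Mp x = s})"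
    and "\<theta> \<equiv> (\<lambda>s. cond_exp_ev P (effect Mp Yp) {x \<in> space P. strat Mp x = s})"
    and "wATEM \<equiv> (\<lambda>s. case s of
            Al \<Rightarrow> pS Al
          | Mi \<Rightarrow> (pS Ma + \<beta>M) * measure P {x \<in> space P. D x}
          | Ma \<Rightarrow> pS Ma * measure P {x \<in> space P. \<not> D x}
          | Ne \<Rightarrow> 0)"
    and "wATTM \<equiv> (\<lambda>s. case s of
            Al \<Rightarrow> pS Al
          | Mi \<Rightarrow> pS Ma + \<beta>M
          | Ma \<Rightarrow> 0
          | Ne \<Rightarrow> 0)"
    and "wATE \<equiv> (\<lambda>s. case s of
            Al \<Rightarrow> pS Al
          | Mi \<Rightarrow> pS Mi
          | Ma \<Rightarrow> pS Ma
          | Ne \<Rightarrow> pS Ne)"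
  shows "(pS Al > 0 \<longrightarrow> \<theta> Al = \<beta>Y)
       \<and> (pS Mi > 0 \<longrightarrow> \<theta> Mi = \<beta>Y + (\<integral>x. of_bool (Yp False True x) \<partial>P))
       \<and> (pS Ma > 0 \<longrightarrow> \<theta> Ma = - (\<integral>x. of_bool (Yp False True x) \<partial>P))
       \<and> (pS Ne > 0 \<longrightarrow> \<theta> Ne = 0)
       \<and> pS Mi = pS Ma + \<beta>M
       \<and> (measure P {x \<in> space P. Mobs D Mp x} > 0 \<longrightarrow>
            cond_exp_ev P (effect Mp Yp) {x \<in> space P. Mobs D Mp x} = wavg wATEM \<theta>)
       \<and> (measure P {x \<in> space P. D x \<and> Mobs D Mp x} > 0 \<longrightarrow>
            cond_exp_ev P (effect Mp Yp) {x \<in> space P. D x \<and> Mobs D Mp x} = wavg wATTM \<theta>)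
       \<and> (\<integral>x. effect Mp Yp x \<partial>P) = wavg wATE \<theta>
       \<and> (measure P {x \<in> space P. D x} > 0 \<longrightarrow>
            cond_exp_ev P (effect Mp Yp) {x \<in> space P. D x} = wavg wATE \<theta>)"
  proof -
  interpret Q: pa P D Mp Yp by (rule pa.intro) (fact assms)+
  note dfs = assms(4-10)
  have pSe: "pS s = Q.pS s" for s by (simp add: dfs Q.pS_def)
  define c where "c = (\<lambda>s. case s of Al \<Rightarrow> Q.E11 - Q.E01 | Mi \<Rightarrow> Q.E11 | Ma \<Rightarrow> - Q.E01 | Ne \<Rightarrow> 0)"
  have num_s: "(\<integral>x. effect Mp Yp x * of_bool (strat Mp x = s) \<partial>P) = Q.pS s * c s" for s
  proof -
    have k: "(\<integral>x. effect Mp Yp x * of_bool (strat Mp x = s) \<partial>P) =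
      (\<integral>x. 1 \<partial>P) * ((Q.gs s (True,True) * Q.pS Al + Q.gs s (False,True) * Q.pS Mi) * Q.E11
            - (Q.gs s (True,True) * Q.pS Al + Q.gs s (True,False) * Q.pS Ma) * Q.E01)"
      using Q.KEY(2)[of "\<lambda>_. 1" "Q.gs s", unfolded Q.gs_strat] by simp
    show ?thesis unfolding k
      by (cases s) (simp_all add: Q.gs_def c_def Q.prob_space algebra_simps)
  qed
  have den_s: "(\<integral>x. of_bool (strat Mp x = s) \<partial>P) = Q.pS s" for s
    by (simp add: Q.pS_def Q.meas_eq)
  have th: "\<theta> s = Q.pS s * c s / Q.pS s" for s
    by (simp add: dfs Q.cond_eq num_s den_s)
  have pth: "Q.pS s * \<theta> s = Q.pS s * c s" for s
    by (cases "Q.pS s = 0") (simp_all add: th)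
  have intY11: "integrable P (\<lambda>x. of_bool (Yp True True x) :: real)"
    using Q.inth[of "\<lambda>(a,b,c,d). of_bool d"] by (simp add: Q.yy_def)
  have intY01: "integrable P (\<lambda>x. of_bool (Yp False True x) :: real)"
    using Q.inth[of "\<lambda>(a,b,c,d). of_bool b"] by (simp add: Q.yy_def)
  have bY: "\<beta>Y = Q.E11 - Q.E01"
    using intY11 intY01 by (simp add: dfs Q.E11_def Q.E01_def)
  have bM: "\<beta>M = Q.pS Mi - Q.pS Ma"
    using Q.Eg[of "\<lambda>p. of_bool (snd p) - of_bool (fst p)"] by (simp add: dfs Q.mm_def)
  have sum1: "Q.pS Al + Q.pS Mi + Q.pS Ma + Q.pS Ne = 1"
    using Q.Eg[of "\<lambda>_. 1"] by (simp add: Q.prob_space)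
  have mD: "measure P {x \<in> space P. D x} = Q.a"
    by (simp add: Q.meas_eq Q.a_def)
  have mnD: "measure P {x \<in> space P. \<not> D x} = 1 - Q.a"
    using Q.Ef[of "\<lambda>b. of_bool (\<not> b)"] by (simp add: Q.meas_eq)
  have c1: "\<theta> Al = c Al" if "pS Al > 0" using that th[of Al] by (simp add: pSe)
  have c2: "\<theta> Mi = c Mi" if "pS Mi > 0" using that th[of Mi] by (simp add: pSe)
  have c3: "\<theta> Ma = c Ma" if "pS Ma > 0" using that th[of Ma] by (simp add: pSe)
  have c4: "\<theta> Ne = c Ne" if "pS Ne > 0" using that th[of Ne] by (simp add: pSe)
  have iD: "(\<integral>x. of_bool (D x) \<partial>P) = Q.a" by (simp add: Q.a_def)
  have inD: "(\<integral>x. of_bool (\<not> D x) \<partial>P) = 1 - Q.a"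
    using Q.Ef[of "\<lambda>b. of_bool (\<not> b)"] by simp
  have i1: "(\<integral>x. (1::real) \<partial>P) = 1" by (simp add: Q.prob_space)
  define g1 :: "bool \<times> bool \<Rightarrow> real" where "g1 = (\<lambda>p. of_bool (snd p))"
  define g0 :: "bool \<times> bool \<Rightarrow> real" where "g0 = (\<lambda>p. of_bool (fst p))"
  define fD :: "bool \<Rightarrow> real" where "fD = (\<lambda>b. of_bool b)"
  define fnD :: "bool \<Rightarrow> real" where "fnD = (\<lambda>b. of_bool (\<not> b))"
  define f1 :: "bool \<Rightarrow> real" where "f1 = (\<lambda>b. 1)"
  define g11 :: "bool \<times> bool \<Rightarrow> real" where "g11 = (\<lambda>p. 1)"
  have pwM: "effect Mp Yp x * of_bool (Mobs D Mp x) =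
      effect Mp Yp x * fD (D x) * g1 (Q.mm x) + effect Mp Yp x * fnD (D x) * g0 (Q.mm x)" for x
    by (cases "D x") (simp_all add: Mobs_def Q.mm_def fD_def fnD_def g1_def g0_def)
  have numM: "(\<integral>x. effect Mp Yp x * of_bool (Mobs D Mp x) \<partial>P) =
      Q.a * ((Q.pS Al + Q.pS Mi) * Q.E11 - Q.pS Al * Q.E01)
      + (1 - Q.a) * (Q.pS Al * Q.E11 - (Q.pS Al + Q.pS Ma) * Q.E01)"
    unfolding pwM Bochner_Integration.integral_add[OF Q.KEY(1) Q.KEY(1)] Q.KEY(2)
    by (simp add: fD_def fnD_def g1_def g0_def iD inD)
  have pwM': "(of_bool (Mobs D Mp x) :: real) = fD (D x) * g1 (Q.mm x) + fnD (D x) * g0 (Q.mm x)" for x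
    by (cases "D x") (simp_all add: Mobs_def Q.mm_def fD_def fnD_def g1_def g0_def)
  have denM: "(\<integral>x. of_bool (Mobs D Mp x) \<partial>P) =
      Q.a * (Q.pS Al + Q.pS Mi) + (1 - Q.a) * (Q.pS Al + Q.pS Ma)"
    unfolding pwM' Bochner_Integration.integral_add[OF Q.den(1) Q.den(1)] Q.den(2) Q.Eg
    by (simp add: fD_def fnD_def g1_def g0_def iD inD)
  have pwT: "effect Mp Yp x * of_bool (D x \<and> Mobs D Mp x) = effect Mp Yp x * fD (D x) * g1 (Q.mm x)" for x
    by (cases "D x") (simp_all add: Mobs_def Q.mm_def fD_def g1_def)
  have numT: "(\<integral>x. effect Mp Yp x * of_bool (D x \<and> Mobs D Mp x) \<partial>P) =
      Q.a * ((Q.pS Al + Q.pS Mi) * Q.E11 - Q.pS Al * Q.E01)"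
    unfolding pwT Q.KEY(2) by (simp add: fD_def g1_def iD)
  have pwT': "(of_bool (D x \<and> Mobs D Mp x) :: real) = fD (D x) * g1 (Q.mm x)" for x
    by (cases "D x") (simp_all add: Mobs_def Q.mm_def fD_def g1_def)
  have denT: "(\<integral>x. of_bool (D x \<and> Mobs D Mp x) \<partial>P) = Q.a * (Q.pS Al + Q.pS Mi)"
    unfolding pwT' Q.den(2) Q.Eg by (simp add: fD_def g1_def iD)
  have pwA: "effect Mp Yp x = effect Mp Yp x * f1 (D x) * g11 (Q.mm x)" for x
    by (simp add: f1_def g11_def)
  have numA: "(\<integral>x. effect Mp Yp x \<partial>P) =
      (Q.pS Al + Q.pS Mi) * Q.E11 - (Q.pS Al + Q.pS Ma) * Q.E01"
    by (subst pwA) (simp only: Q.KEY(2); simp add: f1_def g11_def i1 Q.prob_space)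
  have pwD: "effect Mp Yp x * of_bool (D x) = effect Mp Yp x * fD (D x) * g11 (Q.mm x)" for x
    by (simp add: fD_def g11_def)
  have numD: "(\<integral>x. effect Mp Yp x * of_bool (D x) \<partial>P) =
      Q.a * ((Q.pS Al + Q.pS Mi) * Q.E11 - (Q.pS Al + Q.pS Ma) * Q.E01)"
    unfolding pwD Q.KEY(2) by (simp add: fD_def g11_def iD)
  have pth2: "Q.pS s * k * \<theta> s = Q.pS s * k * c s" for s k
    using pth[of s] by (metis mult.commute mult.assoc)
  have r6: "cond_exp_ev P (effect Mp Yp) {x \<in> space P. Mobs D Mp x} = wavg wATEM \<theta>"
  proof -
    have "wavg wATEM \<theta> = (Q.pS Al * \<theta> Al + Q.pS Mi * Q.a * \<theta> Mi + Q.pS Ma * (1 - Q.a) * \<theta> Ma)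
        / (Q.pS Al + Q.pS Mi * Q.a + Q.pS Ma * (1 - Q.a))"
      by (simp add: wavg_def assms(8) pSe bM mD mnD algebra_simps)
    also have "\<dots> = (Q.pS Al * c Al + Q.pS Mi * Q.a * c Mi + Q.pS Ma * (1 - Q.a) * c Ma)
        / (Q.pS Al + Q.pS Mi * Q.a + Q.pS Ma * (1 - Q.a))"
      by (simp add: pth pth2)
    also have "\<dots> = cond_exp_ev P (effect Mp Yp) {x \<in> space P. Mobs D Mp x}"
      unfolding Q.cond_eq numM denM by (simp add: c_def algebra_simps)
    finally show ?thesis by simp
  qed
  have r7: "cond_exp_ev P (effect Mp Yp) {x \<in> space P. D x \<and> Mobs D Mp x} = wavg wATTM \<theta>"
    if "measure P {x \<in> space P. D x \<and> Mobs D Mp x} > 0"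
  proof -
    have "0 < Q.a * (Q.pS Al + Q.pS Mi)" using that by (simp add: Q.meas_eq denT)
    hence "Q.a \<noteq> 0" by auto
    have "wavg wATTM \<theta> = (Q.pS Al * \<theta> Al + Q.pS Mi * \<theta> Mi) / (Q.pS Al + Q.pS Mi)"
      by (simp add: wavg_def assms(9) pSe bM)
    also have "\<dots> = (Q.pS Al * c Al + Q.pS Mi * c Mi) / (Q.pS Al + Q.pS Mi)"
      by (simp add: pth)
    also have "\<dots> = cond_exp_ev P (effect Mp Yp) {x \<in> space P. D x \<and> Mobs D Mp x}"
      unfolding Q.cond_eq numT denT mult_divide_mult_cancel_left_if using \<open>Q.a \<noteq> 0\<close> by (simp add: c_def algebra_simps)
    finally show ?thesis by simp
  qed
  have wE: "wavg wATE \<theta> = (Q.pS Al + Q.pS Mi) * Q.E11 - (Q.pS Al + Q.pS Ma) * Q.E01"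
  proof -
    have "wavg wATE \<theta> = (Q.pS Al * \<theta> Al + Q.pS Mi * \<theta> Mi + Q.pS Ma * \<theta> Ma + Q.pS Ne * \<theta> Ne)
        / (Q.pS Al + Q.pS Mi + Q.pS Ma + Q.pS Ne)"
      by (simp add: wavg_def assms(10) pSe)
    also have "\<dots> = (Q.pS Al + Q.pS Mi) * Q.E11 - (Q.pS Al + Q.pS Ma) * Q.E01"
      unfolding pth sum1 by (simp add: c_def algebra_simps)
    finally show ?thesis .
  qed
  have r9: "cond_exp_ev P (effect Mp Yp) {x \<in> space P. D x} = wavg wATE \<theta>"
    if "measure P {x \<in> space P. D x} > 0"
  proof -
    have "Q.a \<noteq> 0" using that mD by simp
    thus ?thesis unfolding Q.cond_eq numD wE iD by simp
  qed
  show ?thesis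
    using c1 c2 c3 c4 r6 r7 r9 wE numA bY bM
    by (simp add: pSe c_def Q.E01_def)

qed

end
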